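(* For $A=(a_{ij}) \in {\operatorname{\mathsf{TPD}}}_n(\mathbb{S}_{\max}^{\vee})$ with the diagonal elements $d_n \leq \cdots \leq d_1$ we have \[ P_A = \bigoplus_{k=0}^{n} \bigg((\ominus \mathbf{1})^{n-k} (\prod_{i\in [n-k]}d_i)\bigg)\mathsf{X}^{k}\enspace .\]
   Context: $\mathbb{S}_{\max}$ is the symmetrized tropical semiring over a divisible totally ordered abelian group, with zero $\mathbf{0}$, unit $\mathbf{1}$, minus $\ominus$; $\mathbb{S}_{\max}^\vee$ is the set of signed elements. $A\in{\operatorname{\mathsf{TPD}}}_n(\mathbb{S}_{\max}^\vee)$: $A$ symmetric with signed entries, $\mathbf{0}<x^TAx$ for all nonzero signed vectors $x$ (equivalently $\mathbf{0}<a_{ii}$, $a_{ij}^2<a_{ii}a_{jj}$ for $i\ne j$), where $a<b$ iff $b\ominus a$ is positive. $P_A=\det(\mathsf{X} I\ominus A)$ is the formal characteristic polynomial over $\mathbb{S}_{\max}$ (signed determinant, expanded formally). $[m]=\{1,\dots,m\}$, and the empty product ($[0]$) equals $\mathbf{1}$. *)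

theory Defs
  imports "HOL-Combinatorics.Permutations" "HOL-Computational_Algebra.Polynomial"
begin

text \<open>Signs: positive, negative (minus), balanced.\<close>
datatype sgn3 = SP | SN | SB

fun sjoin :: "sgn3 \<Rightarrow> sgn3 \<Rightarrow> sgn3" where
  "sjoin SP SP = SP" | "sjoin SN SN = SN" | "sjoin _ _ = SB"

fun smul :: "sgn3 \<Rightarrow> sgn3 \<Rightarrow> sgn3" where
  "smul SP t = t" | "smul SN SP = SN" | "smul SN SN = SP" | "smul _ _ = SB"

fun sflip :: "sgn3 \<Rightarrow> sgn3" where
  "sflip SP = SN" | "sflip SN = SP" | "sflip SB = SB"

text \<open>Elements: the zero (tropical -infinity) or a modulus in the group with a sign.
  Tropical multiplication is the group addition, tropical unit is the group zero.\<close>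
datatype 'a smax = SZero | SE 'a sgn3

instantiation smax :: (linordered_ab_group_add) comm_semiring_1
begin

definition zero_smax :: "'a smax" where "zero_smax = SZero"
definition one_smax :: "'a smax" where "one_smax = SE 0 SP"

fun plus_smax :: "'a smax \<Rightarrow> 'a smax \<Rightarrow> 'a smax" where
  "plus_smax SZero y = y"
| "plus_smax (SE a s) SZero = SE a s"
| "plus_smax (SE a s) (SE b t) =
     (if b < a then SE a s else if a < b then SE b t else SE a (sjoin s t))"

fun times_smax :: "'a smax \<Rightarrow> 'a smax \<Rightarrow> 'a smax" where
  "times_smax SZero y = SZero"
| "times_smax (SE a s) SZero = SZero"
| "times_smax (SE a s) (SE b t) = SE (a + b) (smul s t)"

lemma sjoin_comm: "sjoin s t = sjoin t s" by (cases s; cases t; simp)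
lemma sjoin_assoc: "sjoin (sjoin s t) u = sjoin s (sjoin t u)" by (cases s; cases t; cases u; simp)
lemma sjoin_idem: "sjoin s s = s" by (cases s; simp)
lemma smul_comm: "smul s t = smul t s" by (cases s; cases t; simp)
lemma smul_assoc: "smul (smul s t) u = smul s (smul t u)" by (cases s; cases t; cases u; simp)
lemma smul_distrib: "smul s (sjoin t u) = sjoin (smul s t) (smul s u)"
  by (cases s; cases t; cases u; simp)

instance
proof
  fix x y z :: "'a smax"
  show "x + y + z = x + (y + z)"
    by (cases x; cases y; cases z; auto simp: sjoin_assoc)
  show "x + y = y + x"
    by (cases x; cases y; auto simp: sjoin_comm)
  show "0 + x = x" by (simp add: zero_smax_def)
  show "x * y * z = x * (y * z)"
    by (cases x; cases y; cases z; auto simp: smul_assoc add.assoc)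
  show "x * y = y * x"
    by (cases x; cases y; auto simp: smul_comm add.commute)
  show "1 * x = x" by (cases x; simp add: one_smax_def)
  show "(x + y) * z = x * z + y * z"
    by (cases x; cases y; cases z; auto simp: smul_comm smul_distrib)
  show "0 * x = 0" by (simp add: zero_smax_def)
  show "x * 0 = 0" by (cases x; simp add: zero_smax_def)
  show "(0::'a smax) \<noteq> 1" by (simp add: zero_smax_def one_smax_def)
qed

end

fun sneg :: "'a smax \<Rightarrow> 'a smax" where
  "sneg SZero = SZero" | "sneg (SE a s) = SE a (sflip s)"

definition sminus :: "'a::linordered_ab_group_add smax \<Rightarrow> 'a smax \<Rightarrow> 'a smax" where
  "sminus a b = a + sneg b"

definition spositive :: "'a smax \<Rightarrow> bool" where
  "spositive x \<longleftrightarrow> (\<exists>a. x = SE a SP)"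

definition ssigned :: "'a smax \<Rightarrow> bool" where
  "ssigned x \<longleftrightarrow> x = SZero \<or> (\<exists>a s. x = SE a s \<and> s \<noteq> SB)"

definition slt :: "'a::linordered_ab_group_add smax \<Rightarrow> 'a smax \<Rightarrow> bool" where
  "slt a b \<longleftrightarrow> spositive (sminus b a)"

definition sle :: "'a::linordered_ab_group_add smax \<Rightarrow> 'a smax \<Rightarrow> bool" where
  "sle a b \<longleftrightarrow> slt a b \<or> a = b"

text \<open>n x n matrices are functions on indices 0..n-1.
  TPD_n(S_max^\<or>): symmetric, signed entries, 0 < x^T A x for every nonzero signed vector x.\<close>
definition TPD :: "nat \<Rightarrow> (nat \<Rightarrow> nat \<Rightarrow> 'a::linordered_ab_group_add smax) \<Rightarrow> bool" where
  "TPD n A \<longleftrightarrow>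
     (\<forall>i<n. \<forall>j<n. A i j = A j i \<and> ssigned (A i j)) \<and>
     (\<forall>x :: nat \<Rightarrow> 'a smax. (\<forall>i<n. ssigned (x i)) \<and> (\<exists>i<n. x i \<noteq> 0) \<longrightarrow>
        slt 0 (\<Sum>i<n. \<Sum>j<n. x i * A i j * x j))"

definition sdet :: "nat \<Rightarrow> (nat \<Rightarrow> nat \<Rightarrow> 'a::linordered_ab_group_add smax poly) \<Rightarrow> 'a smax poly" where
  "sdet n M = (\<Sum>p | p permutes {..<n}.
      smult (if evenperm p then 1 else sneg 1) (\<Prod>i<n. M i (p i)))"

definition charpoly :: "nat \<Rightarrow> (nat \<Rightarrow> nat \<Rightarrow> 'a::linordered_ab_group_add smax) \<Rightarrow> 'a smax poly" where
  "charpoly n A = sdet n (\<lambda>i j. (if i = j then monom 1 1 else 0) + [:sneg (A i j):])"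

end

theory Submission
  imports Defs
begin

fun mods :: "'a smax \<Rightarrow> 'a::zero" where
  "mods SZero = 0" | "mods (SE a s) = a"

definition sdom :: "'a::linordered_ab_group_add \<Rightarrow> sgn3 \<Rightarrow> 'a smax \<Rightarrow> bool" where
  "sdom M s x \<longleftrightarrow> x = 0 \<or> (\<exists>a t. x = SE a t \<and> a < M) \<or> x = SE M s"

lemma sdom_add: "sdom M s x \<Longrightarrow> sdom M s y \<Longrightarrow> sdom M s (x + y)"
  unfolding sdom_def zero_smax_def
  by (cases x; cases y; auto simp: sjoin_idem; fastforce)

lemma sdom_sum: "finite I \<Longrightarrow> (\<And>i. i \<in> I \<Longrightarrow> sdom M s (f i)) \<Longrightarrow> sdom M s (sum f I)"
proof (induction I rule: finite_induct)
  case empty then show ?case by (simp add: sdom_def)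
next
  case (insert x F) then show ?case by (simp add: sdom_add)
qed

lemma sdom_hit: "sdom M s y \<Longrightarrow> SE M s + y = SE M s"
  unfolding sdom_def zero_smax_def by (auto simp: sjoin_idem)

lemma sum_hit:
  assumes "finite I" "i0 \<in> I" "f i0 = SE M s" "\<And>i. i \<in> I \<Longrightarrow> sdom M s (f i)"
  shows "sum f I = SE M s"
proof -
  have "sum f I = f i0 + sum f (I - {i0})" using assms by (simp add: sum.remove)
  moreover have "sdom M s (sum f (I - {i0}))" using assms by (intro sdom_sum) auto
  ultimately show ?thesis using assms sdom_hit by simp
qed

lemma sneg_eq: "sneg x = sneg 1 * (x::'a::linordered_ab_group_add smax)"
  proof -
  have f: "sflip s = smul SN s" for s by (cases s) auto
  show ?thesis by (cases x) (auto simp: one_smax_def zero_smax_def f)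
qed

lemma sneg1_pow: "(sneg 1 :: 'a::linordered_ab_group_add smax) ^ m = SE 0 (if even m then SP else SN)"
  by (induction m) (auto simp: one_smax_def)

lemma prod_pos:
  "finite T \<Longrightarrow> (\<And>i. i \<in> T \<Longrightarrow> f i = SE (g i) SP) \<Longrightarrow> prod f T = SE (sum g T) (SP::sgn3)"
proof (induction T rule: finite_induct)
  case empty then show ?case by (simp add: one_smax_def)
next
  case (insert x F) then show ?case by simp
qed

lemma prod_nz:
  "finite T \<Longrightarrow> (\<And>i. i \<in> T \<Longrightarrow> f i \<noteq> SZero) \<Longrightarrow> \<exists>s. prod f T = SE (\<Sum>i\<in>T. mods (f i)) s"
proof (induction T rule: finite_induct)
  case empty then show ?case by (simp add: one_smax_def)
next
  case (insert x F)
  then obtain s where "prod f F = SE (\<Sum>i\<in>F. mods (f i)) s" by auto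
  moreover obtain a t where "f x = SE a t" using insert by (cases "f x") auto
  ultimately show ?case using insert by auto
qed

lemma double_le: "(a::'a::linordered_ab_group_add) + a \<le> b + b \<Longrightarrow> a \<le> b"
  by (meson add_strict_mono not_le)
lemma double_less: "(a::'a::linordered_ab_group_add) + a < b + b \<Longrightarrow> a < b"
  by (meson add_mono not_le)

lemma rearr:
  fixes e :: "nat \<Rightarrow> 'a::linordered_ab_group_add"
  assumes "T \<subseteq> {..<n}" "card T = m" "\<And>i j. i \<le> j \<Longrightarrow> j < n \<Longrightarrow> e j \<le> e i"
  shows "sum e T \<le> sum e {..<m}"
proof -
  have fT: "finite T" using assms(1) finite_subset by blast
  have mn: "m \<le> n" using assms card_mono[of "{..<n}" T] by auto
  define X where "X = T - {..<m}"
  define Y where "Y = {..<m} - T"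
  define C where "C = T \<inter> {..<m}"
  have fX: "finite X" "finite Y" "finite C" using fT by (auto simp: X_def Y_def C_def)
  have T1: "T = C \<union> X" "C \<inter> X = {}" by (auto simp: X_def C_def)
  have T2: "{..<m} = C \<union> Y" "C \<inter> Y = {}" by (auto simp: Y_def C_def)
  have "card T = card C + card X" using T1 fX by (simp add: card_Un_disjoint)
  moreover have "m = card C + card Y" using T2 fX card_Un_disjoint[of C Y] by (metis card_lessThan)
  ultimately have cXY: "card X = card Y" using assms by simp
  then obtain h where h: "bij_betw h X Y" using finite_same_card_bij fX by blast
  have "sum e X \<le> sum (e \<circ> h) X"
  proof (rule sum_mono)
    fix x assume x: "x \<in> X"
    then have "h x \<in> Y" using h bij_betwE by blast
    then show "e x \<le> (e \<circ> h) x" using x assms(1,3) by (auto simp: X_def Y_def)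
  qed
  also have "\<dots> = sum e Y" using sum.reindex_bij_betw[OF h] by simp
  finally have "sum e X \<le> sum e Y" .
  then show ?thesis using T1 T2 fX by (simp add: sum.union_disjoint)
qed

lemma sum_two: "finite S \<Longrightarrow> i \<in> S \<Longrightarrow> j \<in> S \<Longrightarrow> i \<noteq> j \<Longrightarrow>
   (\<And>b. b \<in> S \<Longrightarrow> b \<noteq> i \<Longrightarrow> b \<noteq> j \<Longrightarrow> g b = 0) \<Longrightarrow> sum g S = g i + g j"
  by (subst sum.mono_neutral_right[of S "{i,j}"]) auto

lemma sum_one: "finite S \<Longrightarrow> i \<in> S \<Longrightarrow>
   (\<And>b. b \<in> S \<Longrightarrow> b \<noteq> i \<Longrightarrow> g b = 0) \<Longrightarrow> sum g S = g i"
  by (subst sum.mono_neutral_right[of S "{i}"]) auto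

lemma sneg0: "sneg (0::'a::linordered_ab_group_add smax) = 0" by (simp add: zero_smax_def)

lemma slt0: "slt 0 q \<longleftrightarrow> spositive q"
  by (simp add: slt_def sminus_def sneg0)

lemma tpd_diag:
  assumes "TPD n A" "i < n"
  shows "\<exists>\<alpha>. A i i = SE \<alpha> SP"
proof -
  define x :: "nat \<Rightarrow> 'a smax" where "x = (\<lambda>a. if a = i then 1 else 0)"
  have "(\<forall>a<n. ssigned (x a)) \<and> (\<exists>a<n. x a \<noteq> 0)"
    using assms by (auto simp: x_def ssigned_def one_smax_def zero_smax_def)
  then have "slt 0 (\<Sum>a<n. \<Sum>b<n. x a * A a b * x b)" using assms(1) unfolding TPD_def by blast
  moreover have "(\<Sum>a<n. \<Sum>b<n. x a * A a b * x b) = A i i"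
    using assms(2) by (simp add: x_def sum_one[of _ i])
  ultimately show ?thesis by (auto simp: slt0 spositive_def)
qed

lemma notpos: "False" if "(b::'a::linordered_ab_group_add) \<le> c" "spositive (SE b SP + SE c SN + (SE c SN + SE b SP))"
proof (cases "b = c")
  case True then show ?thesis using that by (simp add: spositive_def)
next
  case False
  with that have "b < c" by simp
  then have "\<not> c < b" by simp
  then show ?thesis using that \<open>b < c\<close> by (simp add: spositive_def)
qed

lemma tpd_off:
  fixes A :: "nat \<Rightarrow> nat \<Rightarrow> 'a::linordered_ab_group_add smax"
  assumes divisible: "\<forall>(x::'a) (m::nat). 0 < m \<longrightarrow> (\<exists>y. (\<Sum>i<m. y) = x)"
    and tpd: "TPD n A" and ij: "i < n" "j < n" "i \<noteq> j"
    and a: "A i j = SE \<gamma> t" "A i i = SE \<alpha> SP" "A j j = SE \<beta> SP"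
  shows "\<gamma> + \<gamma> < \<alpha> + \<beta>"
proof (rule ccontr)
  assume "\<not> ?thesis"
  then have le: "\<alpha> + \<beta> \<le> \<gamma> + \<gamma>" by simp
  obtain y where y: "(\<Sum>i<2::nat. y) = \<beta> - \<alpha>" using divisible[rule_format, of 2 "\<beta> - \<alpha>"] by auto
  then have yy: "y + y = \<beta> - \<alpha>" by (simp add: numeral_2_eq_2)
  have "\<forall>i<n. \<forall>j<n. A i j = A j i \<and> ssigned (A i j)" using tpd unfolding TPD_def by blast
  then have sym: "A j i = A i j" and sg: "ssigned (A i j)" using ij by auto
  then have t: "t \<noteq> SB" using a by (auto simp: ssigned_def)
  define x :: "nat \<Rightarrow> 'a smax" where "x = (\<lambda>a. if a = i then SE y SP else if a = j then SE 0 (sflip t) else 0)"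
  have "(\<forall>a<n. ssigned (x a)) \<and> (\<exists>a<n. x a \<noteq> 0)"
    using ij t by (cases t) (auto simp: x_def ssigned_def zero_smax_def)
  then have "slt 0 (\<Sum>a<n. \<Sum>b<n. x a * A a b * x b)" using tpd unfolding TPD_def by blast
  moreover have "(\<Sum>a<n. \<Sum>b<n. x a * A a b * x b) =
     (x i * A i i * x i + x i * A i j * x j) + (x j * A j i * x i + x j * A j j * x j)"
    using ij by (simp add: sum_two[of _ i j] x_def)
  moreover have "y + \<alpha> + y = \<beta>" using yy by (simp add: algebra_simps)
  moreover have "\<beta> \<le> y + \<gamma>"
  proof -
    have "\<beta> + \<beta> \<le> (y + \<gamma>) + (y + \<gamma>)" using yy le
      by (metis add.assoc add.commute add_le_cancel_left diff_add_cancel)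
    then show ?thesis by (rule double_le)
  qed
  moreover have "x i * A i i * x i + x i * A i j * x j = SE \<beta> SP + SE (y + \<gamma>) SN"
    using t a ij \<open>y + \<alpha> + y = \<beta>\<close> by (cases t) (simp_all add: x_def add.commute add.left_commute)
  moreover have "x j * A j i * x i + x j * A j j * x j = SE (y + \<gamma>) SN + SE \<beta> SP"
    using t a ij sym by (cases t) (simp_all add: x_def add.commute add.left_commute)
  ultimately have "spositive (SE \<beta> SP + SE (y + \<gamma>) SN + (SE (y + \<gamma>) SN + SE \<beta> SP))"
    by (simp only: slt0)
  with \<open>\<beta> \<le> y + \<gamma>\<close> show False by (rule notpos)
qed

lemma prod_U:
  assumes "finite B"
  shows "(\<Prod>i\<in>B. if i = p i then monom (1::'a::comm_semiring_1) 1 else 0) =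
         (if \<forall>i\<in>B. p i = i then monom 1 (card B) else 0)"
proof (cases "\<forall>i\<in>B. p i = i")
  case True
  then have "(\<Prod>i\<in>B. if i = p i then monom (1::'a) 1 else 0) = (\<Prod>i\<in>B. monom 1 1)"
    by (intro prod.cong) auto
  also have "\<dots> = monom 1 (card B)" by (simp add: prod_constant monom_power)
  finally show ?thesis using True by simp
next
  case False
  then obtain i where "i \<in> B" "p i \<noteq> i" by blast
  then have "(\<Prod>i\<in>B. if i = p i then monom (1::'a) 1 else 0) = 0"
    using assms by (intro prod_zero) (auto intro!: bexI[of _ i])
  then show ?thesis using False by simp
qed

lemma prod_constpoly: "finite T \<Longrightarrow> (\<Prod>i\<in>T. [:c i:]) = [:\<Prod>i\<in>T. c i:]"
  by (induction T rule: finite_induct) (auto simp: mult_to_poly mult.commute)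

lemma coeff_expand:
  fixes A :: "nat \<Rightarrow> nat \<Rightarrow> 'a::linordered_ab_group_add smax"
  shows "coeff (\<Prod>i<n. (if i = p i then monom 1 1 else 0) + [:sneg (A i (p i)):]) k =
    (\<Sum>B\<in>Pow {..<n}. if (\<forall>i\<in>B. p i = i) \<and> card B = k then \<Prod>i\<in>{..<n} - B. sneg (A i (p i)) else 0)"
proof -
  have "(\<Prod>i<n. (if i = p i then monom 1 1 else 0) + [:sneg (A i (p i)):]) =
     (\<Sum>B\<in>Pow {..<n}. (\<Prod>i\<in>B. if i = p i then monom 1 1 else 0) * (\<Prod>i\<in>{..<n} - B. [:sneg (A i (p i)):]))"
    by (rule prod_add) simp
  also have "\<dots> = (\<Sum>B\<in>Pow {..<n}. (if \<forall>i\<in>B. p i = i then monom 1 (card B) else 0) * [:\<Prod>i\<in>{..<n} - B. sneg (A i (p i)):])"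
    by (intro sum.cong refl) (auto simp: prod_U prod_constpoly finite_subset)
  finally show ?thesis
    by (auto simp: coeff_sum coeff_monom_mult coeff_pCons split: nat.splits intro!: sum.cong)
qed

lemma sle_pos: "sle (SE a SP) (SE b SP) \<Longrightarrow> (a::'a::linordered_ab_group_add) \<le> b"
  by (cases "a < b"; cases "b < a") (auto simp: sle_def slt_def sminus_def spositive_def)

lemma permutes_sub:
  assumes "p permutes {..<n}" "\<forall>i\<in>B. p i = i"
  shows "p permutes ({..<n} - B)"
  unfolding permutes_def
proof
  show "\<forall>x. x \<notin> {..<n} - B \<longrightarrow> p x = x"
  proof (intro allI impI)
    fix x assume "x \<notin> {..<n} - B"
    then consider "x \<in> B" | "x \<notin> {..<n}" by auto
    then show "p x = x" using assms(2) permutes_not_in[OF assms(1)] by cases auto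
  qed
  show "\<forall>y. \<exists>!x. p x = y" using assms(1) by (simp add: permutes_def)
qed

lemma mods_sneg: "mods (sneg x) = mods x" by (cases x) auto

theorem corollary4p7:
  fixes A :: "nat \<Rightarrow> nat \<Rightarrow> 'a::linordered_ab_group_add smax"
    and n :: nat and d :: "nat \<Rightarrow> 'a smax" and \<sigma> :: "nat \<Rightarrow> nat"
  assumes divisible: "\<forall>(x::'a) (m::nat). 0 < m \<longrightarrow> (\<exists>y. (\<Sum>i<m. y) = x)"
    and tpd: "TPD n A"
    and perm: "\<sigma> permutes {..<n}"
    and diag: "\<forall>i<n. d i = A (\<sigma> i) (\<sigma> i)"
    and sorted: "\<forall>i j. i \<le> j \<and> j < n \<longrightarrow> sle (d j) (d i)"
  shows "charpoly n A = (\<Sum>k\<le>n. monom ((sneg 1) ^ (n - k) * (\<Prod>i<n - k. d i)) k)"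
proof -
  let ?P = "{p. p permutes {..<n}}"
  define h where "h i = mods (A i i)" for i
  have h: "A i i = SE (h i) SP" if "i < n" for i
    using tpd_diag[OF tpd that] by (auto simp: h_def)
  define e where "e j = h (\<sigma> j)" for j
  have sig: "\<sigma> j < n" if "j < n" for j using perm that permutes_in_image by fastforce
  have d_e: "d j = SE (e j) SP" if "j < n" for j using diag h sig that by (simp add: e_def)
  have e_anti: "e j \<le> e i" if "i \<le> j" "j < n" for i j
  proof -
    have "sle (d j) (d i)" using sorted that by blast
    then show ?thesis using d_e[of i] d_e[of j] that sle_pos by simp
  qed
  have bound: "sum h T \<le> sum e {..<m}" if T: "T \<subseteq> {..<n}" "card T = m" for T m
  proof -
    define T' where "T' = {j\<in>{..<n}. \<sigma> j \<in> T}"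
    have inj: "inj_on \<sigma> T'" using permutes_inj[OF perm] by (auto intro: inj_on_subset)
    have img: "\<sigma> ` T' = T"
    proof
      show "\<sigma> ` T' \<subseteq> T" by (auto simp: T'_def)
      show "T \<subseteq> \<sigma> ` T'"
      proof
        fix t assume "t \<in> T"
        then have "t \<in> \<sigma> ` {..<n}" using T permutes_image[OF perm] by auto
        then show "t \<in> \<sigma> ` T'" using \<open>t \<in> T\<close> by (auto simp: T'_def)
      qed
    qed
    have "sum h T = sum (h \<circ> \<sigma>) T'" using img inj sum.reindex by metis
    also have "\<dots> = sum e T'" by (simp add: e_def comp_def)
    also have "\<dots> \<le> sum e {..<m}"
    proof (rule rearr[of T' n])
      show "T' \<subseteq> {..<n}" by (auto simp: T'_def)
      show "card T' = m" using card_image[OF inj] img T(2) by simp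
      show "e j \<le> e i" if "i \<le> j" "j < n" for i j using e_anti that by blast
    qed
    finally show ?thesis .
  qed
  show ?thesis
  proof (rule poly_eqI)
    fix k
    define trm where "trm p B = (if evenperm p then 1 else sneg 1) *
       (if (\<forall>i\<in>B. p i = i) \<and> card B = k then \<Prod>i\<in>{..<n} - B. sneg (A i (p i)) else 0)" for p B
    have lhs: "coeff (charpoly n A) k = (\<Sum>p\<in>?P. \<Sum>B\<in>Pow {..<n}. trm p B)"
      unfolding charpoly_def sdet_def trm_def by (simp add: coeff_sum coeff_expand sum_distrib_left)
    have rhs: "coeff (\<Sum>k\<le>n. monom ((sneg 1) ^ (n - k) * (\<Prod>i<n - k. d i)) k) k =
       (if k \<le> n then (sneg 1) ^ (n - k) * (\<Prod>i<n - k. d i) else 0)"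
      by (simp add: coeff_sum coeff_monom)
    show "coeff (charpoly n A) k = coeff (\<Sum>k\<le>n. monom ((sneg 1) ^ (n - k) * (\<Prod>i<n - k. d i)) k) k"
    proof (cases "k \<le> n")
      case False
      have "trm p B = 0" if "B \<in> Pow {..<n}" for p B
      proof -
        have "card B \<le> n" using that card_mono[of "{..<n}" B] by auto
        then show ?thesis using False by (simp add: trm_def)
      qed
      then show ?thesis using lhs rhs False by simp
    next
      case True
      define m where "m = n - k"
      define M where "M = sum e {..<m}"
      define s0 where "s0 = (if even m then SP else SN)"
      have R: "(sneg 1) ^ (n - k) * (\<Prod>i<n - k. d i) = SE M s0"
      proof -
        have "(\<Prod>i<m. d i) = SE M SP" unfolding M_def by (rule prod_pos) (use d_e m_def in auto)
        then show ?thesis by (simp add: m_def[symmetric] sneg1_pow s0_def)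
      qed
      have idterm: "(\<Prod>i\<in>T. sneg (A i i)) = SE (sum h T) s0" if "T \<subseteq> {..<n}" "card T = m" for T
      proof -
        have fT: "finite T" using that finite_subset by blast
        have "(\<Prod>i\<in>T. sneg (A i i)) = (\<Prod>i\<in>T. sneg 1 * A i i)"
          by (rule prod.cong) (auto intro: sneg_eq)
        also have "\<dots> = sneg 1 ^ card T * (\<Prod>i\<in>T. A i i)" by (simp add: prod.distrib prod_constant)
        also have "(\<Prod>i\<in>T. A i i) = SE (sum h T) SP" by (rule prod_pos) (use fT that h in auto)
        finally show ?thesis using that by (simp add: sneg1_pow s0_def)
      qed
      have dom: "sdom M s0 (trm p B)" if p: "p permutes {..<n}" and B: "B \<subseteq> {..<n}" for p B
      proof (cases "(\<forall>i\<in>B. p i = i) \<and> card B = k")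
        case False
        then have "trm p B = 0" unfolding trm_def by (subst if_not_P) auto
        then show ?thesis by (simp add: sdom_def)
      next
        case True
        define T where "T = {..<n} - B"
        have fT: "finite T" by (simp add: T_def)
        have cT: "card T = m" using True B by (simp add: T_def m_def card_Diff_subset finite_subset)
        have Tsub: "T \<subseteq> {..<n}" by (auto simp: T_def)
        have pT: "p permutes T" unfolding T_def using permutes_sub p True by blast
        have pi: "p i \<in> T" if "i \<in> T" for i using pT that permutes_in_image by fastforce
        have tr: "trm p B = (if evenperm p then 1 else sneg 1) * (\<Prod>i\<in>T. sneg (A i (p i)))"
          using True by (simp add: trm_def T_def)
        have hM: "sum h T \<le> M" unfolding M_def by (rule bound[OF Tsub cT])
        show ?thesis
        proof (cases "\<forall>i\<in>T. p i = i")
          case True2: True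
          have "p = id"
          proof
            fix x show "p x = id x"
              using True True2 permutes_not_in[OF p, of x] by (cases "x < n") (auto simp: T_def)
          qed
          then have "trm p B = SE (sum h T) s0" using tr idterm[OF Tsub cT] by (simp add: evenperm_id)
          then show ?thesis using hM by (cases "sum h T = M") (auto simp: sdom_def)
        next
          case False2: False
          then obtain i0 where i0: "i0 \<in> T" "p i0 \<noteq> i0" by blast
          show ?thesis
          proof (cases "\<exists>i\<in>T. A i (p i) = 0")
            case True3: True
            then obtain i1 where i1: "i1 \<in> T" "A i1 (p i1) = 0" by blast
            then have "sneg (A i1 (p i1)) = 0" by (simp add: zero_smax_def)
            then have "(\<Prod>i\<in>T. sneg (A i (p i))) = 0" by (rule prod_zero[OF fT bexI[where P="\<lambda>a. sneg (A a (p a)) = 0", OF _ i1(1)]])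
            then show ?thesis using tr by (simp add: sdom_def)
          next
            case False3: False
            define g where "g i = mods (A i (p i))" for i
            have Ag: "\<exists>t. A i (p i) = SE (g i) t" if "i \<in> T" for i
              using False3 that by (cases "A i (p i)") (auto simp: g_def zero_smax_def)
            have key: "g i + g i < h i + h (p i)" if iT: "i \<in> T" and ne: "p i \<noteq> i" for i
            proof -
              obtain t where "A i (p i) = SE (g i) t" using Ag iT by blast
              then show ?thesis
                using tpd_off[OF divisible tpd, of i "p i" "g i" t "h i" "h (p i)"] h[of i] h[of "p i"]
                  iT pi[OF iT] Tsub ne by auto
            qed
            have lt: "sum g T < sum h T"
            proof (rule double_less)
              have "sum g T + sum g T = (\<Sum>i\<in>T. g i + g i)" by (simp add: sum.distrib)
              also have "\<dots> < (\<Sum>i\<in>T. h i + h (p i))"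
              proof (rule sum_strict_mono_ex1[OF fT])
                show "\<forall>i\<in>T. g i + g i \<le> h i + h (p i)"
                proof
                  fix i assume iT: "i \<in> T"
                  show "g i + g i \<le> h i + h (p i)"
                  proof (cases "p i = i")
                    case True then show ?thesis using h[of i] iT Tsub by (auto simp: g_def)
                  next
                    case False then show ?thesis using key[OF iT] by simp
                  qed
                qed
                show "\<exists>i\<in>T. g i + g i < h i + h (p i)" using key i0 by blast
              qed
              also have "\<dots> = sum h T + sum (h \<circ> p) T" by (simp add: sum.distrib)
              also have "sum (h \<circ> p) T = sum h T" by (rule sum.permute[OF pT, symmetric])
              finally show "sum g T + sum g T < sum h T + sum h T" .
            qed
            have nz: "sneg (A i (p i)) \<noteq> SZero" if "i \<in> T" for i
              using Ag[OF that] by auto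
            obtain s where s: "(\<Prod>i\<in>T. sneg (A i (p i))) = SE (\<Sum>i\<in>T. mods (sneg (A i (p i)))) s"
              using prod_nz[OF fT, of "\<lambda>i. sneg (A i (p i))"] nz by blast
            have sg: "\<exists>u. (if evenperm p then 1 else sneg 1 :: 'a smax) = SE 0 u"
              by (simp add: one_smax_def)
            then obtain u where u: "(if evenperm p then 1 else sneg 1 :: 'a smax) = SE 0 u" by blast
            have "trm p B = SE (sum g T) (smul u s)"
              using tr s u by (simp add: mods_sneg g_def)
            then show ?thesis using lt hM unfolding sdom_def by auto
          qed
        qed
      qed
      define B0 where "B0 = {..<n} - \<sigma> ` {..<m}"
      have Ssub: "\<sigma> ` {..<m} \<subseteq> {..<n}" using sig by (auto simp: m_def)
      have injm: "inj_on \<sigma> {..<m}" using permutes_inj[OF perm] by (auto intro: inj_on_subset)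
      have cS: "card (\<sigma> ` {..<m}) = m" using card_image[OF injm] by simp
      have cB0: "card B0 = k" using True Ssub cS by (simp add: B0_def card_Diff_subset m_def)
      have TB0: "{..<n} - B0 = \<sigma> ` {..<m}" using Ssub by (auto simp: B0_def)
      have "sum h (\<sigma> ` {..<m}) = sum (h \<circ> \<sigma>) {..<m}" using sum.reindex[OF injm] by simp
      also have "\<dots> = M" by (simp add: M_def e_def comp_def)
      finally have hS: "sum h (\<sigma> ` {..<m}) = M" .
      have tid: "trm id B0 = SE M s0"
        using cB0 TB0 idterm[OF Ssub cS] hS by (simp add: trm_def evenperm_id)
      have inner: "(\<Sum>B\<in>Pow {..<n}. trm id B) = SE M s0"
        by (rule sum_hit[of _ B0]) (use tid dom[OF permutes_id] in \<open>auto simp: B0_def\<close>)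
      have "(\<Sum>p\<in>?P. \<Sum>B\<in>Pow {..<n}. trm p B) = SE M s0"
      proof (rule sum_hit[of _ id])
        show "finite ?P" by (simp add: finite_permutations)
        show "id \<in> ?P" by (simp add: permutes_id)
        show "(\<Sum>B\<in>Pow {..<n}. trm id B) = SE M s0" by (rule inner)
        show "sdom M s0 (\<Sum>B\<in>Pow {..<n}. trm p B)" if "p \<in> ?P" for p
          by (rule sdom_sum) (use dom that in auto)
      qed
      then show ?thesis using lhs rhs R True by simp
    qed

  qed
qed

end
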